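(* Let $d\ge1$ and $a_1,\dots,a_d>0$, and define $G:(0,\infty)\to\mathbb{R}$ by $$G(k)=2k\sum_{j=1}^d\tan\left(\frac{\pi}{2}\left(\left\lceil\frac{ka_j}{\pi}\right\rceil-\frac{ka_j}{\pi}\right)\right).$$ Then: (i) a point $k>0$ is a discontinuity of $G$ if and only if $k=m\pi/a_j$ for some $j\in\{1,\dots,d\}$ and some $m\in\mathbb{N}$; (ii) $G$ is strictly decreasing on each interval of continuity; (iii) for every $m\in\mathbb{N}$ and $j\in\{1,\dots,d\}$, $\lim_{k\searrow m\pi/a_j}G(k)=+\infty$.
   Context: $\lceil\cdot\rceil$ denotes the ceiling function and $\mathbb{N}=\{1,2,3,\dots\}$. *)

theory Defs
  imports "HOL-Analysis.Analysis"
begin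

definition G :: "nat \<Rightarrow> (nat \<Rightarrow> real) \<Rightarrow> real \<Rightarrow> real" where
  "G d a k = 2 * k * (\<Sum>j=1..d. tan (pi / 2 * (real_of_int \<lceil>k * a j / pi\<rceil> - k * a j / pi)))"

end

theory Submission imports Defs begin

lemma sin_lt_self: fixes x::real assumes "0 < x" shows "sin x < x"
proof (cases "x < 2")
  case True
  have h: "sin (x/2) \<le> x/2" using assms by (intro sin_x_le_x) auto
  have s0: "sin (x/2) \<ge> 0" using True assms pi_gt3 by (intro sin_ge_zero) auto
  have c1: "cos (x/2) < 1" using True assms pi_gt3 cos_monotone_0_pi[of 0 "x/2"] by simp
  have c0: "cos (x/2) > 0" using True assms pi_gt3 by (intro cos_gt_zero) auto
  have "sin x = 2 * sin (x/2) * cos (x/2)" using sin_double[of "x/2"] by simp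
  also have "\<dots> \<le> 2 * (x/2) * cos (x/2)" using h c0 by (intro mult_right_mono) auto
  also have "\<dots> < x" using c1 assms by simp
  finally show ?thesis .
next
  case False
  then show ?thesis using sin_le_one[of x] by linarith
qed

lemma dec_piece:
  fixes a x y n :: real
  assumes a: "a > 0" and n1: "1 \<le> n" and x0: "0 < x" and xy: "x < y" and lo: "n - 1 < x*a/pi" and hi: "y*a/pi < n"
  shows "2*y*tan(pi/2*(n - y*a/pi)) < 2*x*tan(pi/2*(n - x*a/pi))"
proof (rule DERIV_neg_imp_decreasing[OF xy])
  fix t assume tx: "x \<le> t" and ty: "t \<le> y"
  define c where "c = pi/2*(n - t*a/pi)"
  have ta: "x*a/pi \<le> t*a/pi" "t*a/pi \<le> y*a/pi" using tx ty a by (auto intro!: divide_right_mono)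
  have t0: "t > 0" using x0 tx by linarith
  have c0: "0 < c" unfolding c_def using ta hi by auto
  have "n - t*a/pi < 1" using ta lo by linarith
  hence c1: "c < pi/2" unfolding c_def by simp
  have cos0: "cos c > 0" using c0 c1 by (intro cos_gt_zero) auto
  have sin0: "sin c > 0" using c0 c1 by (intro sin_gt_zero) auto
  have "DERIV (\<lambda>t. 2*t*tan(pi/2*(n - t*a/pi))) t :> 2 * tan c + 2*t*(inverse ((cos c)^2) * (-(pi/2)*(a/pi)))"
    unfolding c_def using cos0
    apply (intro derivative_eq_intros DERIV_tan[THEN DERIV_chain2] | simp add: c_def)+
    done
  moreover have "2 * tan c + 2*t*(inverse ((cos c)^2) * (-(pi/2)*(a/pi))) < 0"
  proof -
    have key: "sin (2*c) < t*a"
    proof (cases "n < 2")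
      case True
      have "n - 1 < 1" using True by simp
      have "2*c = pi - (t*a - (n-1)*pi)" unfolding c_def by (simp add: field_simps)
      hence "sin (2*c) = sin (t*a - (n-1)*pi)" by simp
      also have "\<dots> < t*a - (n-1)*pi" using lo ta by (intro sin_lt_self) (auto simp: field_simps)
      also have "\<dots> \<le> t*a" using n1 by simp
      finally show ?thesis .
    next
      case False
      have "t*a/pi > 1" using lo ta False by linarith
      hence "t*a > pi" by (simp add: field_simps)
      then show ?thesis using sin_le_one[of "2*c"] pi_gt3 by linarith
    qed
    have "tan c < t*a / (2 * (cos c)^2)"
    proof -
      have "tan c = sin c * cos c / (cos c)^2" using cos0 by (simp add: tan_def power2_eq_square)
      also have "\<dots> = sin (2*c) / (2*(cos c)^2)" by (simp add: sin_double)
      also have "\<dots> < t*a / (2 * (cos c)^2)" using key cos0 by (intro divide_strict_right_mono) auto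
      finally show ?thesis .
    qed
    then show ?thesis using cos0 pi_gt_zero by (simp add: field_simps)
  qed
  ultimately show "\<exists>y. DERIV (\<lambda>t. 2*t*tan(pi/2*(n - t*a/pi))) t :> y \<and> y < 0" by blast
qed


definition tm :: "real \<Rightarrow> real \<Rightarrow> real" where
  "tm c k = tan (pi / 2 * (real_of_int \<lceil>k * c / pi\<rceil> - k * c / pi))"

lemma tm_nonneg: "0 \<le> tm c k"
proof -
  define x where "x = k * c / pi"
  have h: "0 \<le> real_of_int \<lceil>x\<rceil> - x" "real_of_int \<lceil>x\<rceil> - x < 1"
    using le_of_int_ceiling[of x] ceiling_correct[of x] by linarith+
  show ?thesis
  proof (cases "real_of_int \<lceil>x\<rceil> - x = 0")
    case True
    hence "pi / 2 * (real_of_int \<lceil>x\<rceil> - x) = 0" by simp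
    then show ?thesis unfolding tm_def x_def[symmetric] by (simp only: tan_zero)
  next
    case False
    hence "0 < real_of_int \<lceil>x\<rceil> - x" using h by linarith
    then show ?thesis unfolding tm_def x_def[symmetric] using h
      by (intro less_imp_le tan_gt_zero) auto
  qed
qed

lemma tm_cont:
  assumes "k * c / pi \<notin> \<int>"
  shows "isCont (tm c) k"
proof -
  define x where "x = k * c / pi"
  have h1: "0 < real_of_int \<lceil>x\<rceil> - x"
    using le_of_int_ceiling[of x] assms unfolding x_def[symmetric]
    by (metis Ints_of_int diff_gt_0_iff_gt order_le_less)
  have h2: "real_of_int \<lceil>x\<rceil> - x < 1"
    using ceiling_correct[of x] by linarith
  note h = h1 h2
  have ce: "isCont (\<lambda>t. real_of_int \<lceil>t * c / pi\<rceil>) k"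
    unfolding isCont_def
    by (rule tendsto_of_int_ceiling) (auto intro!: tendsto_intros simp: assms)
  have "cos (pi / 2 * (real_of_int \<lceil>k * c / pi\<rceil> - k * c / pi)) \<noteq> 0"
    using h unfolding x_def
    by (intro order.strict_implies_not_eq[symmetric] cos_gt_zero) auto
  then show ?thesis unfolding tm_def
    by (intro isCont_tan' continuous_intros ce) auto
qed

lemma G_tm: "G d a k = 2 * k * (\<Sum>j=1..d. tm (a j) k)"
  by (simp add: G_def tm_def)


lemma G_blowup:
  fixes d :: nat and a :: "nat \<Rightarrow> real"
  assumes apos: "\<And>j. j \<in> {1..d} \<Longrightarrow> a j > 0"
    and j: "j \<in> {1..d}" and m: "m \<ge> (1::nat)"
  shows "filterlim (G d a) at_top (at_right (real m * pi / a j))"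
proof -
  define k0 where "k0 = real m * pi / a j"
  have aj: "a j > 0" using apos j by auto
  have k0: "k0 > 0" using aj m unfolding k0_def by auto
  define th where "th k = pi / 2 * (real m + 1 - k * a j / pi)" for k
  have th0: "th k0 = pi / 2" unfolding th_def k0_def using aj pi_gt_zero by simp
  have "(th \<longlongrightarrow> th k0) (at_right k0)" unfolding th_def by (auto intro!: tendsto_intros)
  moreover have "eventually (\<lambda>k. th k \<in> {..<pi/2} \<and> th k \<noteq> pi/2) (at_right k0)"
    using eventually_at_right_less[of k0]
  proof (rule eventually_mono)
    fix k assume "k0 < k"
    hence "k0 * a j < k * a j" using aj by simp
    hence "real m * pi < k * a j" unfolding k0_def using aj by simp
    hence "real m < k * a j / pi" by (simp add: field_simps)
    thus "th k \<in> {..<pi/2} \<and> th k \<noteq> pi/2" unfolding th_def by auto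
  qed
  ultimately have "filterlim th (at_left (pi/2)) (at_right k0)"
    unfolding filterlim_at th0 by auto
  hence "filterlim (\<lambda>k. tan (th k)) at_top (at_right k0)"
    by (rule filterlim_compose[OF filterlim_tan_at_left])
  hence lim: "filterlim (\<lambda>k. 2 * k * tan (th k)) at_top (at_right k0)"
    by (intro filterlim_tendsto_pos_mult_at_top[where c = "2*k0"]) (auto intro!: tendsto_intros simp: k0)
  have ev: "eventually (\<lambda>k. 2 * k * tan (th k) \<le> G d a k) (at_right k0)"
    unfolding eventually_at_right_field
  proof (intro exI[of _ "k0 + pi / a j"] conjI allI impI)
    show "k0 < k0 + pi / a j" using aj by simp
    fix k assume k1: "k0 < k" and k2: "k < k0 + pi / a j"
    have "real m < k * a j / pi"
    proof -
      have "k0 * a j < k * a j" using aj k1 by simp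
      hence "real m * pi < k * a j" unfolding k0_def using aj by simp
      thus ?thesis by (simp add: field_simps)
    qed
    moreover have "k * a j / pi < real m + 1"
    proof -
      have "k * a j < (k0 + pi / a j) * a j" using aj k2 by simp
      also have "\<dots> = (real m + 1) * pi" unfolding k0_def using aj by (simp add: field_simps)
      finally show ?thesis by (simp add: field_simps)
    qed
    ultimately have "\<lceil>k * a j / pi\<rceil> = int m + 1" by (subst ceiling_eq_iff) auto
    hence tj: "tm (a j) k = tan (th k)" unfolding tm_def th_def by simp
    have "tm (a j) k \<le> (\<Sum>i=1..d. tm (a i) k)"
      using j by (intro member_le_sum tm_nonneg) auto
    hence "2 * k * tm (a j) k \<le> 2 * k * (\<Sum>i=1..d. tm (a i) k)"
      using k0 k1 by (intro mult_left_mono) auto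
    thus "2 * k * tan (th k) \<le> G d a k" unfolding G_tm tj .
  qed
  show ?thesis unfolding k0_def[symmetric] by (rule filterlim_at_top_mono[OF lim ev])
qed

lemma G_discont:
  fixes d :: nat and a :: "nat \<Rightarrow> real"
  assumes apos: "\<And>j. j \<in> {1..d} \<Longrightarrow> a j > 0"
    and j: "j \<in> {1..d}" and m: "m \<ge> (1::nat)"
  shows "\<not> isCont (G d a) (real m * pi / a j)"
proof
  assume c: "isCont (G d a) (real m * pi / a j)"
  hence "(G d a \<longlongrightarrow> G d a (real m * pi / a j)) (at_right (real m * pi / a j))"
    unfolding isCont_def by (rule tendsto_mono[OF at_le, rotated]) simp
  moreover have "filterlim (G d a) at_infinity (at_right (real m * pi / a j))"
    by (rule filterlim_at_top_imp_at_infinity[OF G_blowup[of d a j m, OF apos j m]])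
  ultimately show False
    by (intro not_tendsto_and_filterlim_at_infinity[of "at_right (real m * pi / a j)" "G d a"]) auto
qed

lemma G_cont:
  fixes d :: nat and a :: "nat \<Rightarrow> real"
  assumes "\<And>j. j \<in> {1..d} \<Longrightarrow> k * a j / pi \<notin> \<int>"
  shows "isCont (G d a) k"
proof -
  have "isCont (\<lambda>k. 2 * k * (\<Sum>j=1..d. tm (a j) k)) k"
    using assms by (intro continuous_intros tm_cont) auto
  thus ?thesis by (simp add: G_tm[abs_def])
qed

lemma int_to_nat:
  assumes "k > 0" "c > 0" "k * c / pi \<in> \<int>"
  obtains m :: nat where "m \<ge> 1" "k = real m * pi / c"
proof -
  from assms(3) obtain z where z: "k * c / pi = of_int z" by (auto elim: Ints_cases)
  have "of_int z > (0::real)" using z[symmetric] assms(1,2) by simp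
  hence "z \<ge> 1" by simp
  moreover have "k = real (nat z) * pi / c" using z assms(2) \<open>z \<ge> 1\<close> by (simp add: field_simps)
  ultimately show ?thesis using that[of "nat z"] by simp
qed

theorem lemma3p2:
  fixes d :: nat and a :: "nat \<Rightarrow> real"
  assumes "d \<ge> 1"
    and "\<And>j. j \<in> {1..d} \<Longrightarrow> a j > 0"
  shows "(\<forall>k>0. \<not> isCont (G d a) k \<longleftrightarrow>
            (\<exists>j\<in>{1..d}. \<exists>m::nat. m \<ge> 1 \<and> k = real m * pi / a j))
      \<and> (\<forall>I::real set. is_interval I \<longrightarrow> I \<subseteq> {0<..} \<longrightarrow> (\<forall>k\<in>I. isCont (G d a) k) \<longrightarrow>
            (\<forall>x\<in>I. \<forall>y\<in>I. x < y \<longrightarrow> G d a y < G d a x))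
      \<and> (\<forall>j\<in>{1..d}. \<forall>m::nat. m \<ge> 1 \<longrightarrow>
            filterlim (G d a) at_top (at_right (real m * pi / a j)))"
proof (intro conjI)
  note apos = assms(2)
  have disc: "\<not> isCont (G d a) k" if hk: "k > 0" "j \<in> {1..d}" "k * a j / pi \<in> \<int>" for k j
  proof -
    obtain m :: nat where "m \<ge> 1" "k = real m * pi / a j"
      using int_to_nat[OF hk(1) apos[OF hk(2)] hk(3)] .
    thus ?thesis using G_discont[of d a j, OF apos hk(2)] by simp
  qed
  show "\<forall>k>0. \<not> isCont (G d a) k \<longleftrightarrow>
            (\<exists>j\<in>{1..d}. \<exists>m::nat. m \<ge> 1 \<and> k = real m * pi / a j)"
  proof (intro allI impI iffI)
    fix k :: real assume k: "k > 0" and nc: "\<not> isCont (G d a) k"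
    have "\<exists>j\<in>{1..d}. k * a j / pi \<in> \<int>" using G_cont nc by blast
    then obtain j where j: "j \<in> {1..d}" "k * a j / pi \<in> \<int>" by blast
    obtain m :: nat where "m \<ge> 1" "k = real m * pi / a j"
      using int_to_nat[OF k apos[OF j(1)] j(2)] .
    thus "\<exists>j\<in>{1..d}. \<exists>m::nat. m \<ge> 1 \<and> k = real m * pi / a j" using j by blast
  next
    fix k :: real assume "\<exists>j\<in>{1..d}. \<exists>m::nat. m \<ge> 1 \<and> k = real m * pi / a j"
    then obtain j m where "j \<in> {1..d}" "m \<ge> (1::nat)" "k = real m * pi / a j" by blast
    thus "\<not> isCont (G d a) k" using G_discont[of d a j m, OF apos] by simp
  qed
  show "\<forall>j\<in>{1..d}. \<forall>m::nat. m \<ge> 1 \<longrightarrow>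
            filterlim (G d a) at_top (at_right (real m * pi / a j))"
    using G_blowup[of d a, OF apos] by blast
  show "\<forall>I::real set. is_interval I \<longrightarrow> I \<subseteq> {0<..} \<longrightarrow> (\<forall>k\<in>I. isCont (G d a) k) \<longrightarrow>
            (\<forall>x\<in>I. \<forall>y\<in>I. x < y \<longrightarrow> G d a y < G d a x)"
  proof (intro allI impI ballI)
    fix I :: "real set" and x y
    assume iv: "is_interval I" and pos: "I \<subseteq> {0<..}" and cI: "\<forall>k\<in>I. isCont (G d a) k"
      and xI: "x \<in> I" and yI: "y \<in> I" and xy: "x < y"
    have x0: "x > 0" using pos xI by auto
    have piece: "2 * y * tm (a j) y < 2 * x * tm (a j) x" if j: "j \<in> {1..d}" for j
    proof -
      have aj: "a j > 0" using apos j by auto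
      define n where "n = \<lceil>x * a j / pi\<rceil>"
      have xn: "x * a j / pi \<notin> \<int>" using disc[OF x0 j] cI xI by blast
      have lo: "real_of_int n - 1 < x * a j / pi" unfolding n_def using ceiling_correct by linarith
      have xlt: "x * a j / pi < real_of_int n"
        using le_of_int_ceiling[of "x * a j / pi"] xn unfolding n_def
        by (metis Ints_of_int order_le_less)
      have xpos: "x * a j / pi > 0" using x0 aj by simp
      have n1: "real_of_int n \<ge> 1"
      proof -
        have "n > 0" unfolding n_def using xpos by simp
        thus ?thesis by simp
      qed
      have hi: "y * a j / pi < real_of_int n"
      proof (rule ccontr)
        assume "\<not> y * a j / pi < real_of_int n"
        hence yge: "real_of_int n \<le> y * a j / pi" by simp
        define k' where "k' = real_of_int n * pi / a j"
        have "k' * a j / pi = real_of_int n" unfolding k'_def using aj by simp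
        hence kint: "k' * a j / pi \<in> \<int>" by simp
        have "x < k'" unfolding k'_def using xlt aj by (simp add: field_simps)
        moreover have "k' \<le> y" unfolding k'_def using yge aj by (simp add: field_simps)
        ultimately have "k' \<in> I" using iv xI yI unfolding is_interval_1 by (meson less_imp_le)
        moreover have "k' > 0" using x0 \<open>x < k'\<close> by simp
        ultimately show False using disc[OF _ j kint] cI by blast
      qed
      have yn: "\<lceil>y * a j / pi\<rceil> = n"
      proof -
        have "x * a j / pi < y * a j / pi" using xy aj by (simp add: divide_strict_right_mono)
        thus ?thesis using lo hi by (subst ceiling_eq_iff) auto
      qed
      show ?thesis unfolding tm_def yn n_def[symmetric]
        by (rule dec_piece[OF aj n1 x0 xy lo hi])
    qed
    have "G d a y = (\<Sum>j=1..d. 2 * y * tm (a j) y)" by (simp add: G_tm sum_distrib_left)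
    also have "\<dots> < (\<Sum>j=1..d. 2 * x * tm (a j) x)"
      using assms(1) piece by (intro sum_strict_mono) auto
    also have "\<dots> = G d a x" by (simp add: G_tm sum_distrib_left)
    finally show "G d a y < G d a x" .
  qed
qed

end
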